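(* Assume condition (H). Then the convex quadrangle inequality $$d_{i,l}+d_{j,k}\le d_{i,k}+d_{j,l}$$ holds for all $i,j,k,l\in\mathbb{N}\cup\{-1\}$ with $i\le j\le k\le l$. Moreover, for all $m,n\in\mathbb{N}$ with $m\le n$, the transport plan produced by the Inside-Out procedure for $(\pi^m,\pi^n)$ is an optimal solution of the minimization problem defining $d_{m,n}$.
   Context: Let $\mathbb{N}=\{0,1,2,\dots\}$. Fix a sequence $(\pi^n)_{n\in\mathbb{N}}$ where each $\pi^n=(\pi^n_i)_{i\in\mathbb{N}}$ is a probability distribution on $\mathbb{N}$ with support contained in $\{0,\dots,n\}$, and $\pi^n\ne\pi^m$ for $m\ne n$. Define reals $d_{m,n}$ for $m,n\in\mathbb{N}\cup\{-1\}$ recursively as follows: $d_{-1,-1}=0$, $d_{-1,j}=d_{j,-1}=1$ for $j\in\mathbb{N}$, and for $m,n\in\mathbb{N}$, $$d_{m,n}=\min_{z\in\mathcal{F}_{m,n}}\sum_{i=0}^m\sum_{j=0}^n z_{i,j}\,d_{i-1,j-1},$$ where $\mathcal{F}_{m,n}$ is the set of transport plans from $\pi^m$ to $\pi^n$, i.e. arrays $z=(z_{i,j})_{0\le i\le m,\,0\le j\le n}$ with $z_{i,j}\ge0$, $\sum_{j=0}^n z_{i,j}=\pi^m_i$ for all $i\le m$, and $\sum_{i=0}^m z_{i,j}=\pi^n_j$ for all $j\le n$. Condition (H) means: for every $n\ge1$, $\pi^n_n>0$ and $0\le\pi^n_i\le\pi^{n-1}_i$ for all $i<n$. Inside-Out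 procedure (input $\pi^m,\pi^n$ with $m\le n$): (1) for each $i=0,\dots,m$ set $z_{i,i}=\pi^n_i$ and $z_{j,i}=0$ for $j\ne i$, and compute the residual supply $\sigma_i=\pi^m_i-\pi^n_i$; (2) the remaining demands are $\pi^n_j$ at the nodes $j=m+1,\dots,n$; process the supply nodes in the order $i=m,m-1,\dots,0$, and use $\sigma_i$ to fill the still-unmet demands at nodes $j>m$ in increasing order of $j$ (starting at the first node whose demand is not yet completely met, which may have been partially filled by the previous supply node), setting $z_{i,j}$ equal to the amount sent from $i$ to $j$, until $\sigma_i$ is depleted; all other entries of $z$ are $0$. *)

theory Defs
  imports Complex_Main
begin

text \<open>A sequence of distributions is a map p :: nat => nat => real, p n i = p^n_i.\<close>

definition transport_plans :: "(nat \<Rightarrow> nat \<Rightarrow> real) \<Rightarrow> nat \<Rightarrow> nat \<Rightarrow> (nat \<Rightarrow> nat \<Rightarrow> real) set" where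
  "transport_plans p m n =
     {z. (\<forall>i j. (i > m \<or> j > n) \<longrightarrow> z i j = 0)
       \<and> (\<forall>i\<le>m. \<forall>j\<le>n. 0 \<le> z i j)
       \<and> (\<forall>i\<le>m. (\<Sum>j\<le>n. z i j) = p m i)
       \<and> (\<forall>j\<le>n. (\<Sum>i\<le>m. z i j) = p n j)}"

text \<open>Shifted table: D p a b = d_{a-1,b-1}, so D p 0 _ / D p _ 0 are the index -1 entries.\<close>

function D :: "(nat \<Rightarrow> nat \<Rightarrow> real) \<Rightarrow> nat \<Rightarrow> nat \<Rightarrow> real" where
  "D p 0 0 = 0"
| "D p 0 (Suc n) = 1"
| "D p (Suc m) 0 = 1"
| "D p (Suc m) (Suc n) =
     Inf ((\<lambda>z. \<Sum>i\<le>m. \<Sum>j\<le>n. z i j * D p i j) ` transport_plans p m n)"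
  by pat_completeness auto
termination
  by (relation "measure (\<lambda>(p, a, b). a + b)") auto

definition d :: "(nat \<Rightarrow> nat \<Rightarrow> real) \<Rightarrow> int \<Rightarrow> int \<Rightarrow> real" where
  "d p m n = D p (nat (m + 1)) (nat (n + 1))"

definition plan_cost :: "(nat \<Rightarrow> nat \<Rightarrow> real) \<Rightarrow> nat \<Rightarrow> nat \<Rightarrow> (nat \<Rightarrow> nat \<Rightarrow> real) \<Rightarrow> real" where
  "plan_cost p m n z = (\<Sum>i\<le>m. \<Sum>j\<le>n. z i j * d p (int i - 1) (int j - 1))"

definition is_distribution_seq :: "(nat \<Rightarrow> nat \<Rightarrow> real) \<Rightarrow> bool" where
  "is_distribution_seq p \<longleftrightarrow>
     (\<forall>n i. 0 \<le> p n i) \<and> (\<forall>n. (\<Sum>i\<le>n. p n i) = 1) \<and> (\<forall>n i. n < i \<longrightarrow> p n i = 0)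
     \<and> (\<forall>m n. m \<noteq> n \<longrightarrow> p m \<noteq> p n)"

definition condH :: "(nat \<Rightarrow> nat \<Rightarrow> real) \<Rightarrow> bool" where
  "condH p \<longleftrightarrow> (\<forall>n\<ge>1. p n n > 0 \<and> (\<forall>i<n. 0 \<le> p n i \<and> p n i \<le> p (n - 1) i))"

text \<open>Step (2): greedy filling of the demands at j > m, supply nodes processed in
  the order m, m-1, ..., 0, demand nodes in increasing order.  The greedy assigns to supply node i
  the interval [A_i, A_i + sigma_i) of cumulative supply, where A_i = sum_{k=i+1..m} sigma_k, and to
  demand node j the interval [B_j, B_j + p^n_j), B_j = sum_{l=m+1..j-1} p^n_l; the amount sent
  from i to j is the length of the overlap of these intervals.\<close>

definition io_sigma :: "(nat \<Rightarrow> nat \<Rightarrow> real) \<Rightarrow> nat \<Rightarrow> nat \<Rightarrow> nat \<Rightarrow> real" where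
  "io_sigma p m n i = p m i - p n i"

definition inside_out :: "(nat \<Rightarrow> nat \<Rightarrow> real) \<Rightarrow> nat \<Rightarrow> nat \<Rightarrow> nat \<Rightarrow> nat \<Rightarrow> real" where
  "inside_out p m n i j =
     (if i \<le> m \<and> j \<le> m then (if i = j then p n i else 0)
      else if i \<le> m \<and> m < j \<and> j \<le> n then
        (let A = (\<Sum>k\<in>{i<..m}. io_sigma p m n k);
             B = (\<Sum>l\<in>{m<..<j}. p n l)
         in max 0 (min (A + io_sigma p m n i) (B + p n j) - max A B))
      else 0)"

end

theory Submission
  imports Defs
begin

definition ov :: "real \<Rightarrow> real \<Rightarrow> real \<Rightarrow> real \<Rightarrow> real" where
  "ov lo hi a b = max 0 (min hi b - max lo a)"

lemma ov_comm: "ov lo hi a b = ov a b lo hi"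
  by (simp add: ov_def min.commute max.commute)

lemma ov_nonneg: "0 \<le> ov lo hi a b"
  by (simp add: ov_def)

lemma ov_same: "ov lo hi a a = 0"
  by (simp add: ov_def)

lemma ov_split: "a \<le> b \<Longrightarrow> b \<le> c \<Longrightarrow> lo \<le> hi \<Longrightarrow> ov lo hi a b + ov lo hi b c = ov lo hi a c"
  unfolding ov_def by (simp add: max_def min_def)

lemma chain_up:
  assumes "\<And>k. p \<le> k \<Longrightarrow> k < q \<Longrightarrow> a k \<le> (a (Suc k) :: real)" "p \<le> r" "r \<le> q"
  shows "a p \<le> a r"
  using assms(2,3)
proof (induction r)
  case 0 then show ?case by simp
next
  case (Suc r)
  show ?case
  proof (cases "p = Suc r")
    case True then show ?thesis by simp
  next
    case False
    then have "p \<le> r" using Suc.prems by simp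
    then have "a p \<le> a r" using Suc by simp
    also have "a r \<le> a (Suc r)" using assms(1) \<open>p \<le> r\<close> Suc.prems by simp
    finally show ?thesis .
  qed
qed

lemma chain_down:
  assumes "\<And>k. p \<le> k \<Longrightarrow> k < q \<Longrightarrow> a (Suc k) \<le> (a k :: real)" "p \<le> r" "r \<le> q"
  shows "a r \<le> a p"
  using chain_up[of p q "\<lambda>k. - a k" r] assms by simp

lemma ov_part_up:
  assumes "\<And>k. p \<le> k \<Longrightarrow> k < q \<Longrightarrow> a k \<le> a (Suc k)" "p \<le> q" "lo \<le> hi"
  shows "(\<Sum>k\<in>{p..<q}. ov lo hi (a k) (a (Suc k))) = ov lo hi (a p) (a q)"
  using assms(1,2)
proof (induction q)
  case 0 then show ?case by (simp add: ov_same)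
next
  case (Suc q)
  show ?case
  proof (cases "p = Suc q")
    case True then show ?thesis by (simp add: ov_same)
  next
    case False
    then have pq: "p \<le> q" using Suc.prems by simp
    have "(\<Sum>k\<in>{p..<Suc q}. ov lo hi (a k) (a (Suc k))) = (\<Sum>k\<in>{p..<q}. ov lo hi (a k) (a (Suc k))) + ov lo hi (a q) (a (Suc q))"
      using pq by simp
    also have "\<dots> = ov lo hi (a p) (a q) + ov lo hi (a q) (a (Suc q))"
      using Suc pq by simp
    also have "\<dots> = ov lo hi (a p) (a (Suc q))"
      by (rule ov_split) (use chain_up[of p "Suc q" a q] Suc.prems pq assms(3) in auto)
    finally show ?thesis .
  qed
qed

lemma ov_part_down:
  assumes "\<And>k. p \<le> k \<Longrightarrow> k < q \<Longrightarrow> a (Suc k) \<le> a k" "p \<le> q" "lo \<le> hi"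
  shows "(\<Sum>k\<in>{p..<q}. ov lo hi (a (Suc k)) (a k)) = ov lo hi (a q) (a p)"
  using assms(1,2)
proof (induction q)
  case 0 then show ?case by (simp add: ov_same)
next
  case (Suc q)
  show ?case
  proof (cases "p = Suc q")
    case True then show ?thesis by (simp add: ov_same)
  next
    case False
    then have pq: "p \<le> q" using Suc.prems by simp
    have "(\<Sum>k\<in>{p..<Suc q}. ov lo hi (a (Suc k)) (a k)) = (\<Sum>k\<in>{p..<q}. ov lo hi (a (Suc k)) (a k)) + ov lo hi (a (Suc q)) (a q)"
      using pq by simp
    also have "\<dots> = ov lo hi (a q) (a p) + ov lo hi (a (Suc q)) (a q)"
      using Suc pq by simp
    also have "\<dots> = ov lo hi (a (Suc q)) (a p)"
      using ov_split[of "a (Suc q)" "a q" "a p" lo hi] chain_down[of p "Suc q" a q] Suc.prems pq assms(3)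
      by auto
    finally show ?thesis .
  qed
qed

lemma ov_inside: "0 \<le> lo \<Longrightarrow> lo \<le> hi \<Longrightarrow> hi \<le> S \<Longrightarrow> ov lo hi 0 S = hi - lo"
  unfolding ov_def by (simp add: max_def min_def)

locale iosetup =
  fixes p :: "nat \<Rightarrow> nat \<Rightarrow> real"
  assumes dist: "is_distribution_seq p" and H: "condH p"
begin

lemma nonneg: "0 \<le> p n i"
  using dist by (simp add: is_distribution_seq_def)

lemma sum1: "(\<Sum>i\<le>n. p n i) = 1"
  using dist by (simp add: is_distribution_seq_def)

lemma supp: "n < i \<Longrightarrow> p n i = 0"
  using dist by (simp add: is_distribution_seq_def)

lemma sum1_ge: assumes "n \<le> N" shows "(\<Sum>i\<le>N. p n i) = 1"
  using assms
proof (induction N rule: dec_induct)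
  case base then show ?case using sum1 by simp
next
  case (step N) then show ?case using supp[of n "Suc N"] by simp
qed

lemma Hstep: "i < Suc n \<Longrightarrow> p (Suc n) i \<le> p n i"
  using H[unfolded condH_def, rule_format, of "Suc n"] by simp

lemma Hpos: "1 \<le> n \<Longrightarrow> 0 < p n n"
  using H[unfolded condH_def, rule_format, of n] by simp

lemma mono: "k \<le> n \<Longrightarrow> i \<le> k \<Longrightarrow> p n i \<le> p k i"
proof (induction n)
  case 0 then show ?case by simp
next
  case (Suc n)
  show ?case
  proof (cases "k = Suc n")
    case True then show ?thesis by simp
  next
    case False
    then have "k \<le> n" using Suc.prems by simp
    then have "p n i \<le> p k i" using Suc by simp
    moreover have "p (Suc n) i \<le> p n i" using Hstep \<open>k \<le> n\<close> Suc.prems by simp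
    ultimately show ?thesis by simp
  qed
qed

definition P :: "nat \<Rightarrow> nat \<Rightarrow> real" where "P k x = (\<Sum>i\<le>x. p k i)"

lemma P_le1: "P k x \<le> 1"
proof -
  have "P k x \<le> (\<Sum>i\<le>max x k. p k i)" unfolding P_def
    by (rule sum_mono2) (auto intro: nonneg)
  also have "\<dots> = 1" by (rule sum1_ge) simp
  finally show ?thesis .
qed

lemma P_full: "k \<le> x \<Longrightarrow> P k x = 1"
  unfolding P_def by (rule sum1_ge)

lemma P_anti: assumes "k \<le> l" shows "P l x \<le> P k x"
proof (cases "x \<le> k")
  case True
  then show ?thesis unfolding P_def by (intro sum_mono mono) (use True assms in auto)
next
  case False
  then show ?thesis using P_full[of k x] P_le1[of l x] by simp
qed

lemma P_mono: "x \<le> y \<Longrightarrow> P k x \<le> P k y"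
  unfolding P_def by (rule sum_mono2) (auto intro: nonneg)

end

locale iomn = iosetup +
  fixes m n :: nat
  assumes mn: "m \<le> n"
begin

definition sg :: "nat \<Rightarrow> real" where "sg i = p m i - p n i"
definition R :: "nat \<Rightarrow> real" where "R k = (\<Sum>l\<in>{k..m}. sg l)"
definition Bc :: "nat \<Rightarrow> real" where "Bc j = (\<Sum>l\<in>{m<..<j}. p n l)"
definition S :: real where "S = (\<Sum>l\<in>{m<..n}. p n l)"

lemma sg_nonneg: "i \<le> m \<Longrightarrow> 0 \<le> sg i"
  unfolding sg_def using mono[OF mn, of i] by simp

lemma R_Suc: "k \<le> m \<Longrightarrow> R k = sg k + R (Suc k)"
  unfolding R_def by (simp add: sum.atLeast_Suc_atMost)

lemma R_m: "R (Suc m) = 0"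
  unfolding R_def by simp

lemma R_nonneg: "0 \<le> R k"
  unfolding R_def by (rule sum_nonneg) (auto intro: sg_nonneg)

lemma R_anti: "k \<le> k' \<Longrightarrow> R k' \<le> R k"
  unfolding R_def by (rule sum_mono2) (auto intro: sg_nonneg)

lemma S_alt: "S = 1 - (\<Sum>l\<le>m. p n l)"
proof -
  have "(\<Sum>l\<le>n. p n l) = (\<Sum>l\<le>m. p n l) + (\<Sum>l\<in>{m<..n}. p n l)"
    using mn by (subst sum.union_disjoint[symmetric]) (auto intro: sum.cong)
  then show ?thesis using sum1[of n] unfolding S_def by simp
qed

lemma R_0: "R 0 = S"
proof -
  have "R 0 = (\<Sum>l\<le>m. p m l) - (\<Sum>l\<le>m. p n l)"
    unfolding R_def sg_def by (simp add: sum_subtractf atLeast0AtMost)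
  then show ?thesis using sum1[of m] S_alt by simp
qed

lemma R_le_S: "R k \<le> S"
  using R_anti[of 0 k] R_0 by simp

lemma Bc_Suc: "m < j \<Longrightarrow> Bc (Suc j) = Bc j + p n j"
proof -
  assume "m < j"
  then have "{m<..<Suc j} = insert j {m<..<j}" by auto
  then show ?thesis unfolding Bc_def by simp
qed

lemma Bc_m: "Bc (Suc m) = 0"
proof -
  have "{m<..<Suc m} = {}" by auto
  then show ?thesis unfolding Bc_def by simp
qed

lemma Bc_n: "Bc (Suc n) = S"
  unfolding Bc_def S_def by (rule sum.cong) auto

lemma Bc_nonneg: "0 \<le> Bc j"
  unfolding Bc_def by (rule sum_nonneg) (auto intro: nonneg)

lemma Bc_mono: "j \<le> j' \<Longrightarrow> Bc j \<le> Bc j'"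
  unfolding Bc_def by (rule sum_mono2) (auto intro: nonneg)

lemma Bc_le_S: "j \<le> Suc n \<Longrightarrow> Bc j \<le> S"
  using Bc_mono[of j "Suc n"] Bc_n by simp

abbreviation io where "io \<equiv> inside_out p m n"

lemma io_off: "i \<le> m \<Longrightarrow> m < j \<Longrightarrow> j \<le> n \<Longrightarrow> io i j = ov (R (Suc i)) (R i) (Bc j) (Bc (Suc j))"
proof -
  assume a: "i \<le> m" "m < j" "j \<le> n"
  have A: "(\<Sum>k\<in>{i<..m}. io_sigma p m n k) = R (Suc i)"
    unfolding R_def io_sigma_def sg_def by (rule sum.cong) auto
  have A2: "R (Suc i) + io_sigma p m n i = R i"
    using R_Suc[of i] a unfolding io_sigma_def sg_def by simp
  have B: "(\<Sum>l\<in>{m<..<j}. p n l) = Bc j" unfolding Bc_def ..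
  show ?thesis using a unfolding inside_out_def Let_def A A2 B
    by (simp add: Bc_Suc ov_def)
qed

lemma io_diag: "i \<le> m \<Longrightarrow> j \<le> m \<Longrightarrow> io i j = (if i = j then p n i else 0)"
  unfolding inside_out_def by simp

lemma io_zero: "\<not> i \<le> m \<or> n < j \<Longrightarrow> io i j = 0"
  using mn unfolding inside_out_def by auto

lemma io_lower: "j < i \<Longrightarrow> io i j = 0"
  unfolding inside_out_def by auto

lemma io_nonneg: "0 \<le> io i j"
  unfolding inside_out_def Let_def by (auto intro: nonneg)

lemma split_n: "(\<Sum>j\<le>n. f j) = (\<Sum>j\<le>m. f j) + (\<Sum>j\<in>{m<..n}. (f j :: real))"
  using mn by (subst sum.union_disjoint[symmetric]) (auto intro: sum.cong)

lemma row_off: "i \<le> m \<Longrightarrow> (\<Sum>j\<in>{m<..n}. io i j) = sg i"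
proof -
  assume i: "i \<le> m"
  have "(\<Sum>j\<in>{m<..n}. io i j) = (\<Sum>j\<in>{Suc m..<Suc n}. ov (R (Suc i)) (R i) (Bc j) (Bc (Suc j)))"
    by (rule sum.cong) (auto simp: io_off i)
  also have "\<dots> = ov (R (Suc i)) (R i) (Bc (Suc m)) (Bc (Suc n))"
    by (rule ov_part_up) (use mn R_anti[of i "Suc i"] in \<open>auto simp: Bc_Suc nonneg\<close>)
  also have "\<dots> = R i - R (Suc i)"
    unfolding Bc_m Bc_n by (rule ov_inside) (use R_nonneg R_anti[of i "Suc i"] R_le_S in auto)
  also have "\<dots> = sg i" using R_Suc[OF i] by simp
  finally show ?thesis .
qed

lemma row_sum: "i \<le> m \<Longrightarrow> (\<Sum>j\<le>n. io i j) = p m i"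
proof -
  assume i: "i \<le> m"
  have "(\<Sum>j\<le>m. io i j) = p n i"
    using i by (simp add: io_diag if_distrib sum.delta cong: if_cong)
  then show ?thesis using split_n[of "io i"] row_off[OF i] unfolding sg_def by simp
qed

lemma col_off: "m < j \<Longrightarrow> j \<le> n \<Longrightarrow> (\<Sum>i\<le>m. io i j) = p n j"
proof -
  assume j: "m < j" "j \<le> n"
  have "(\<Sum>i\<le>m. io i j) = (\<Sum>i\<in>{0..<Suc m}. ov (Bc j) (Bc (Suc j)) (R (Suc i)) (R i))"
    by (rule sum.cong) (auto simp: io_off j ov_comm)
  also have "\<dots> = ov (Bc j) (Bc (Suc j)) (R (Suc m)) (R 0)"
    by (rule ov_part_down) (use R_anti Bc_mono[of j "Suc j"] in auto)
  also have "\<dots> = Bc (Suc j) - Bc j"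
    unfolding R_m R_0 by (rule ov_inside) (use Bc_nonneg Bc_mono[of j "Suc j"] Bc_le_S[of "Suc j"] j in auto)
  also have "\<dots> = p n j" using Bc_Suc j by simp
  finally show ?thesis .
qed

lemma col_sum: assumes "j \<le> n" shows "(\<Sum>i\<le>m. io i j) = p n j"
proof (cases "j \<le> m")
  case True
  then show ?thesis by (simp add: io_diag if_distrib sum.delta cong: if_cong)
next
  case False
  then show ?thesis using col_off assms by simp
qed

lemma io_plan: "io \<in> transport_plans p m n"
  unfolding transport_plans_def using io_zero io_nonneg row_sum col_sum by auto

end

context iomn begin

lemma rowN: assumes "n \<le> N" shows "(\<Sum>j\<le>N. io i j) = p m i"
proof (cases "i \<le> m")
  case True
  have "(\<Sum>j\<le>N. io i j) = (\<Sum>j\<le>n. io i j)"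
    by (rule sum.mono_neutral_right) (use assms io_zero in auto)
  then show ?thesis using row_sum[OF True] by simp
next
  case False
  then show ?thesis using io_zero supp[of m i] by simp
qed

lemma colN: assumes "m \<le> N" shows "(\<Sum>i\<le>N. io i j) = p n j"
proof (cases "j \<le> n")
  case True
  have "(\<Sum>i\<le>N. io i j) = (\<Sum>i\<le>m. io i j)"
    by (rule sum.mono_neutral_right) (use assms io_zero in auto)
  then show ?thesis using col_sum[OF True] by simp
next
  case False
  then show ?thesis using io_zero supp[of n j] by simp
qed

lemma sumsplit: assumes "(a::nat) \<le> N" shows "(\<Sum>j\<le>N. f j) = (\<Sum>j\<le>a. f j) + (\<Sum>j\<in>{a<..N}. (f j :: real))"
proof -
  have e: "{..N} = {..a} \<union> {a<..N}" using assms by auto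
  have "sum f ({..a} \<union> {a<..N}) = sum f {..a} + sum f {a<..N}" by (rule sum.union_disjoint) auto
  then show ?thesis using e by simp
qed

lemma L_io: assumes "n \<le> N" "a \<le> N"
  shows "(\<Sum>i\<le>a. \<Sum>j\<in>{a<..N}. io i j) = P m a - P n a"
proof -
  have 1: "(\<Sum>i\<le>a. \<Sum>j\<le>N. io i j) = P m a"
    unfolding P_def using rowN[OF assms(1)] by simp
  have 2: "(\<Sum>i\<le>a. \<Sum>j\<le>a. io i j) = P n a"
  proof -
    have "(\<Sum>i\<le>a. \<Sum>j\<le>a. io i j) = (\<Sum>j\<le>a. \<Sum>i\<le>a. io i j)" by (rule sum.swap)
    also have "\<dots> = (\<Sum>j\<le>a. \<Sum>i\<le>N. io i j)"
      by (rule sum.cong[OF refl], rule sum.mono_neutral_left) (use assms io_lower in auto)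
    also have "\<dots> = P n a" unfolding P_def using colN[of N] assms mn by simp
    finally show ?thesis .
  qed
  have "(\<Sum>i\<le>a. \<Sum>j\<le>N. io i j) = (\<Sum>i\<le>a. \<Sum>j\<le>a. io i j) + (\<Sum>i\<le>a. \<Sum>j\<in>{a<..N}. io i j)"
    using sumsplit[OF assms(2)] by (simp add: sum.distrib)
  then show ?thesis using 1 2 by simp
qed

lemma R_split: "k \<le> m \<Longrightarrow> R 0 = (\<Sum>l\<le>k. sg l) + R (Suc k)"
  unfolding R_def by (subst sum.union_disjoint[symmetric]) (auto intro: sum.cong)

lemma sg_cum: "(\<Sum>l\<le>k. sg l) = P m k - P n k"
  unfolding sg_def P_def by (simp add: sum_subtractf)

lemma Bc_split: "m \<le> k \<Longrightarrow> k \<le> n \<Longrightarrow> S = Bc (Suc k) + (\<Sum>l\<in>{k<..n}. p n l)"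
  unfolding S_def Bc_def by (subst sum.union_disjoint[symmetric]) (auto intro: sum.cong)

lemma tail_P: "k \<le> n \<Longrightarrow> (\<Sum>l\<in>{k<..n}. p n l) = 1 - P n k"
  unfolding P_def using sumsplit[of k n "p n"] sum1[of n] by simp

lemma T_io: assumes "n \<le> N" "x < y"
  shows "(\<Sum>i\<le>x. \<Sum>j\<in>{y<..N}. io i j) = min (P m (min x m) - P n (min x m)) (1 - P n (max y m))"
proof -
  define x' where "x' = min x m"
  define y'' where "y'' = min (max y m) n"
  have inner: "(\<Sum>j\<in>{y<..N}. io i j) = (if i \<le> m then ov (Bc (Suc y'')) S (R (Suc i)) (R i) else 0)"
    if i: "i \<le> x" for i
  proof (cases "i \<le> m")
    case True
    have "(\<Sum>j\<in>{y<..N}. io i j) = (\<Sum>j\<in>{y''<..n}. io i j)"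
    proof (rule sum.mono_neutral_right)
      show "{y''<..n} \<subseteq> {y<..N}" using assms unfolding y''_def by auto
      show "\<forall>j\<in>{y<..N} - {y''<..n}. io i j = 0"
      proof
        fix j assume j: "j \<in> {y<..N} - {y''<..n}"
        show "io i j = 0"
        proof (cases "n < j")
          case True then show ?thesis using io_zero by simp
        next
          case False
          then have "j \<le> m" using j unfolding y''_def by auto
          then show ?thesis using io_diag[OF True \<open>j \<le> m\<close>] i j assms(2) by auto
        qed
      qed
    qed simp
    also have "\<dots> = (\<Sum>j\<in>{Suc y''..<Suc n}. ov (R (Suc i)) (R i) (Bc j) (Bc (Suc j)))"
      by (rule sum.cong) (auto simp: io_off True y''_def)
    also have "\<dots> = ov (R (Suc i)) (R i) (Bc (Suc y'')) (Bc (Suc n))"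
      by (rule ov_part_up) (use R_anti[of i "Suc i"] in \<open>auto simp: Bc_Suc nonneg y''_def\<close>)
    also have "\<dots> = ov (Bc (Suc y'')) S (R (Suc i)) (R i)"
      using Bc_n ov_comm by simp
    finally show ?thesis using True by simp
  next
    case False
    then show ?thesis using io_zero by simp
  qed
  have "(\<Sum>i\<le>x. \<Sum>j\<in>{y<..N}. io i j) = (\<Sum>i\<le>x. if i \<le> m then ov (Bc (Suc y'')) S (R (Suc i)) (R i) else 0)"
    using inner by simp
  also have "\<dots> = (\<Sum>i\<in>{0..<Suc x'}. ov (Bc (Suc y'')) S (R (Suc i)) (R i))"
    by (rule sum.mono_neutral_cong_right) (auto simp: x'_def)
  also have "\<dots> = ov (Bc (Suc y'')) S (R (Suc x')) (R 0)"
    by (rule ov_part_down) (use R_anti Bc_le_S[of "Suc y''"] in \<open>auto simp: y''_def\<close>)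
  also have "\<dots> = S - max (Bc (Suc y'')) (R (Suc x'))"
    unfolding R_0 ov_def using R_le_S Bc_le_S[of "Suc y''"] by (auto simp: y''_def)
  also have "\<dots> = min (S - R (Suc x')) (S - Bc (Suc y''))" by simp
  also have "S - R (Suc x') = P m x' - P n x'"
    using R_split[of x'] R_0 sg_cum[of x'] by (simp add: x'_def)
  also have "S - Bc (Suc y'') = 1 - P n y''"
    using Bc_split[of y''] tail_P[of y''] mn by (simp add: y''_def)
  also have "P n y'' = P n (max y m)"
    using P_full[of n "max y m"] P_full[of n n] by (cases "max y m \<le> n") (auto simp: y''_def)
  finally show ?thesis by (simp add: x'_def)
qed

end

context iomn begin

definition cost :: "(nat \<Rightarrow> nat \<Rightarrow> real) \<Rightarrow> (nat \<Rightarrow> nat \<Rightarrow> real) \<Rightarrow> real" where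
  "cost c z = (\<Sum>i\<le>m. \<Sum>j\<le>n. z i j * c i j)"

definition Jf :: "real \<Rightarrow> nat" where
  "Jf t = (LEAST j. m < j \<and> (j = n \<or> t < Bc (Suc j)))"

lemma Jf_props: assumes "m < n" shows "m < Jf t" "Jf t \<le> n"
proof -
  have ex: "m < n \<and> (n = n \<or> t < Bc (Suc n))" using assms by simp
  show "m < Jf t" unfolding Jf_def using LeastI[of "\<lambda>j. m < j \<and> (j = n \<or> t < Bc (Suc j))", OF ex] by simp
  show "Jf t \<le> n" unfolding Jf_def by (rule Least_le) (use assms in simp)
qed

lemma Jf_le: "m < j \<Longrightarrow> t < Bc (Suc j) \<Longrightarrow> Jf t \<le> j"
  unfolding Jf_def by (rule Least_le) simp

lemma Jf_ge: assumes "m < n" "m < j" "j \<le> n" "Bc j < t" shows "j \<le> Jf t"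
proof (rule ccontr)
  assume "\<not> j \<le> Jf t"
  then have lt: "Jf t < j" by simp
  have "Jf t = n \<or> t < Bc (Suc (Jf t))"
    unfolding Jf_def using LeastI[of "\<lambda>j. m < j \<and> (j = n \<or> t < Bc (Suc j))" n] assms(1) by simp
  then have "t < Bc (Suc (Jf t))" using lt assms(3) by auto
  moreover have "Bc (Suc (Jf t)) \<le> Bc j" using lt by (intro Bc_mono) simp
  ultimately show False using assms(4) by simp
qed

lemma io_pos: assumes "i \<le> m" "m < j" "j \<le> n" "io i j \<noteq> 0"
  shows "Bc j < R i" "R (Suc i) < Bc (Suc j)"
  using assms io_off[OF assms(1-3)] unfolding ov_def by (auto simp: max_def min_def split: if_splits)

lemma tele: "i \<le> k \<Longrightarrow> (\<Sum>r\<in>{i..<k}. f r - f (Suc r)) = f i - (f k :: real)"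
proof (induction k rule: dec_induct)
  case base then show ?case by simp
next
  case (step k) then show ?case by simp
qed

lemma sum_split_ivl: "(i::nat) \<le> k \<Longrightarrow> k \<le> l \<Longrightarrow> (\<Sum>r\<in>{i..<l}. f r) = (\<Sum>r\<in>{i..<k}. f r) + (\<Sum>r\<in>{k..<l}. (f r :: real))"
  using sum.atLeastLessThan_concat[of i k l f] by simp

lemma dual_opt:
  fixes c :: "nat \<Rightarrow> nat \<Rightarrow> real"
  assumes c_nonneg: "\<And>i j. 0 \<le> c i j"
    and c_diag: "\<And>i. i \<le> m \<Longrightarrow> c i i = 0"
    and c_Q: "\<And>r j j'. Suc r \<le> j \<Longrightarrow> j \<le> j' \<Longrightarrow> j' \<le> n \<Longrightarrow> c r j' - c (Suc r) j' \<le> c r j - c (Suc r) j"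
    and c_M: "\<And>r j. Suc r \<le> j \<Longrightarrow> j \<le> n \<Longrightarrow> c (Suc r) j \<le> c r j"
    and z: "z \<in> transport_plans p m n"
  shows "cost c io \<le> cost c z"
proof (cases "m = n")
  case True
  have pt: "io i j * c i j = 0" if "i \<le> m" "j \<le> n" for i j
    using io_diag[of i j] c_diag[of i] that True by auto
  have "cost c io = 0"
    unfolding cost_def by (intro sum.neutral ballI) (simp add: pt)
  moreover have "0 \<le> cost c z"
    unfolding cost_def using z c_nonneg unfolding transport_plans_def
    by (intro sum_nonneg mult_nonneg_nonneg) auto
  ultimately show ?thesis by simp
next
  case False
  then have mlt: "m < n" using mn by simp
  define jr where "jr r = Jf (R (Suc r))" for r
  define tm where "tm r = c r (jr r) - c (Suc r) (jr r)" for r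
  define u where "u i = (\<Sum>r\<in>{i..<m}. tm r)" for i
  define v where "v j = (if j \<le> m then - u j else Min ((\<lambda>i. c i j - u i) ` {..m}))" for j
  have jr: "m < jr r" "jr r \<le> n" for r using Jf_props[OF mlt] unfolding jr_def by auto
  have udiff: "u i - u k = (\<Sum>r\<in>{i..<k}. tm r)" if "i \<le> k" "k \<le> m" for i k
    unfolding u_def using sum_split_ivl[OF that, of tm] by simp
  have tm_nonneg: "0 \<le> tm r" if "r < m" for r
    unfolding tm_def using c_M[of r "jr r"] jr[of r] that by simp
  have tm_le: "tm r \<le> c r j - c (Suc r) j" if "Suc r \<le> j" "j \<le> jr r" for r j
    unfolding tm_def using c_Q[of r j "jr r"] jr that by simp
  have tm_ge: "c r j - c (Suc r) j \<le> tm r" if "Suc r \<le> jr r" "jr r \<le> j" "j \<le> n" for r j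
    unfolding tm_def using c_Q[of r "jr r" j] that by simp
  have feas: "u i + v j \<le> c i j" if "i \<le> m" "j \<le> n" for i j
  proof (cases "j \<le> m")
    case False
    have "Min ((\<lambda>i. c i j - u i) ` {..m}) \<le> c i j - u i" by (rule Min_le) (use that in auto)
    then have "v j \<le> c i j - u i" unfolding v_def using False by simp
    then show ?thesis by simp
  next
    case True
    show ?thesis
    proof (cases "i \<le> j")
      case True
      have "u i - u j = (\<Sum>r\<in>{i..<j}. tm r)" using udiff True \<open>j \<le> m\<close> by simp
      also have "\<dots> \<le> (\<Sum>r\<in>{i..<j}. c r j - c (Suc r) j)"
      proof (rule sum_mono)
        fix r assume "r \<in> {i..<j}"
        then show "tm r \<le> c r j - c (Suc r) j" using tm_le[of r j] jr[of r] \<open>j \<le> m\<close> by simp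
      qed
      also have "\<dots> = c i j - c j j" using tele[OF True, of "\<lambda>r. c r j"] by simp
      finally show ?thesis using c_diag \<open>j \<le> m\<close> v_def by simp
    next
      case False
      have "u j - u i = (\<Sum>r\<in>{j..<i}. tm r)" using udiff False that by simp
      also have "\<dots> \<ge> 0" by (rule sum_nonneg) (use tm_nonneg that in auto)
      finally show ?thesis using c_nonneg[of i j] \<open>j \<le> m\<close> v_def by simp
    qed
  qed
  have slack: "u i + v j = c i j" if "i \<le> m" "j \<le> n" "io i j \<noteq> 0" for i j
  proof (cases "j \<le> m")
    case True
    then have "i = j" using io_diag that by (auto split: if_splits)
    then show ?thesis using c_diag True v_def by simp
  next
    case False
    then have mj: "m < j" by simp
    note pos = io_pos[OF that(1) mj that(2,3)]
    have "Min ((\<lambda>i. c i j - u i) ` {..m}) = c i j - u i"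
    proof (rule Min_eqI)
      show "finite ((\<lambda>i. c i j - u i) ` {..m})" by simp
      show "c i j - u i \<in> (\<lambda>i. c i j - u i) ` {..m}" using that by auto
      fix y assume "y \<in> (\<lambda>i. c i j - u i) ` {..m}"
      then obtain k where k: "k \<le> m" "y = c k j - u k" by auto
      show "c i j - u i \<le> y"
      proof (cases "i \<le> k")
        case True
        have "c i j - c k j = (\<Sum>r\<in>{i..<k}. c r j - c (Suc r) j)" using tele[OF True, of "\<lambda>r. c r j"] by simp
        also have "\<dots> \<le> (\<Sum>r\<in>{i..<k}. tm r)"
        proof (rule sum_mono)
          fix r assume r: "r \<in> {i..<k}"
          have "R (Suc r) \<le> R (Suc i)" using r by (intro R_anti) simp
          then have "jr r \<le> j" unfolding jr_def using pos(2) by (intro Jf_le[OF mj]) simp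
          then show "c r j - c (Suc r) j \<le> tm r" using tm_ge[of r j] jr[of r] r k that by simp
        qed
        also have "\<dots> = u i - u k" using udiff True k by simp
        finally show ?thesis using k by simp
      next
        case False
        have "u k - u i = (\<Sum>r\<in>{k..<i}. tm r)" using udiff False that by simp
        also have "\<dots> \<le> (\<Sum>r\<in>{k..<i}. c r j - c (Suc r) j)"
        proof (rule sum_mono)
          fix r assume r: "r \<in> {k..<i}"
          have "R i \<le> R (Suc r)" using r by (intro R_anti) simp
          then have "j \<le> jr r" unfolding jr_def using pos(1) by (intro Jf_ge[OF mlt mj that(2)]) simp
          then show "tm r \<le> c r j - c (Suc r) j" using tm_le[of r j] r that mj by simp
        qed
        also have "\<dots> = c k j - c i j" using tele[of k i "\<lambda>r. c r j"] False by simp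
        finally show ?thesis using k by simp
      qed
    qed
    then show ?thesis using False v_def by simp
  qed
  have lower: "(\<Sum>i\<le>m. \<Sum>j\<le>n. w i j * (u i + v j)) = (\<Sum>i\<le>m. p m i * u i) + (\<Sum>j\<le>n. p n j * v j)"
    if w: "w \<in> transport_plans p m n" for w
  proof -
    have rs: "\<And>i. i \<le> m \<Longrightarrow> (\<Sum>j\<le>n. w i j) = p m i" and cs: "\<And>j. j \<le> n \<Longrightarrow> (\<Sum>i\<le>m. w i j) = p n j"
      using w unfolding transport_plans_def by auto
    have "(\<Sum>i\<le>m. \<Sum>j\<le>n. w i j * (u i + v j)) = (\<Sum>i\<le>m. \<Sum>j\<le>n. w i j * u i) + (\<Sum>i\<le>m. \<Sum>j\<le>n. w i j * v j)"
      by (simp only: distrib_left sum.distrib)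
    also have "(\<Sum>i\<le>m. \<Sum>j\<le>n. w i j * u i) = (\<Sum>i\<le>m. (\<Sum>j\<le>n. w i j) * u i)"
      by (simp only: sum_distrib_right)
    also have "\<dots> = (\<Sum>i\<le>m. p m i * u i)" by (rule sum.cong) (simp_all add: rs)
    also have "(\<Sum>i\<le>m. \<Sum>j\<le>n. w i j * v j) = (\<Sum>j\<le>n. \<Sum>i\<le>m. w i j * v j)"
      by (rule sum.swap)
    also have "\<dots> = (\<Sum>j\<le>n. (\<Sum>i\<le>m. w i j) * v j)"
      by (simp only: sum_distrib_right)
    also have "\<dots> = (\<Sum>j\<le>n. p n j * v j)" by (rule sum.cong) (simp_all add: cs)
    finally show ?thesis .
  qed
  have "cost c io = (\<Sum>i\<le>m. \<Sum>j\<le>n. io i j * (u i + v j))"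
    unfolding cost_def
  proof (intro sum.cong refl)
    fix i j assume "i \<in> {..m}" "j \<in> {..n}"
    then show "io i j * c i j = io i j * (u i + v j)" using slack[of i j] by (cases "io i j = 0") auto
  qed
  also have "\<dots> = (\<Sum>i\<le>m. \<Sum>j\<le>n. z i j * (u i + v j))"
    using lower[OF io_plan] lower[OF z] by simp
  also have "\<dots> \<le> cost c z"
    unfolding cost_def using z unfolding transport_plans_def
    by (intro sum_mono mult_left_mono feas) auto
  finally show ?thesis .
qed

end

context iomn begin

lemma M_plan:
  fixes c :: "nat \<Rightarrow> nat \<Rightarrow> real"
  assumes mn1: "Suc m \<le> n"
    and cM: "\<And>i j. i \<le> m \<Longrightarrow> m < j \<Longrightarrow> j \<le> n \<Longrightarrow> c (Suc m) j \<le> c i j"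
  shows "\<exists>z \<in> transport_plans p (Suc m) n. (\<Sum>i\<le>Suc m. \<Sum>j\<le>n. z i j * c i j) \<le> cost c io"
proof -
  define th where "th k = (p m k - p (Suc m) k) / sg k" for k
  define w where "w i j = (if m < j then th i * io i j else 0)" for i j
  define z where "z i j = (if i \<le> m then io i j - w i j else if i = Suc m then (\<Sum>k\<le>m. w k j) else 0)" for i j
  have dl: "0 \<le> p m k - p (Suc m) k" "p m k - p (Suc m) k \<le> sg k" if "k \<le> m" for k
    using mono[of m "Suc m" k] mono[of "Suc m" n k] that mn1 unfolding sg_def by auto
  have thsg: "th k * sg k = p m k - p (Suc m) k" if "k \<le> m" for k
  proof (cases "sg k = 0")
    case True then show ?thesis using dl[OF that] by simp
  next
    case False then show ?thesis unfolding th_def by simp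
  qed
  have th01: "0 \<le> th k" "th k \<le> 1" if "k \<le> m" for k
    using dl[OF that] sg_nonneg[OF that] unfolding th_def by (auto simp: divide_le_eq_1 divide_nonneg_nonneg)
  have w_nonneg: "0 \<le> w i j" if "i \<le> m" for i j
    unfolding w_def using th01[OF that] io_nonneg by simp
  have w_le: "w i j \<le> io i j" if "i \<le> m" for i j
    unfolding w_def using th01[OF that] io_nonneg[of i j] by (simp add: mult_left_le_one_le)
  have w_row: "(\<Sum>j\<le>n. w i j) = p m i - p (Suc m) i" if "i \<le> m" for i
  proof -
    have "(\<Sum>j\<le>n. w i j) = (\<Sum>j\<le>m. w i j) + (\<Sum>j\<in>{m<..n}. w i j)" by (rule split_n)
    also have "(\<Sum>j\<le>m. w i j) = 0" unfolding w_def by simp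
    also have "(\<Sum>j\<in>{m<..n}. w i j) = th i * (\<Sum>j\<in>{m<..n}. io i j)"
      unfolding w_def by (simp add: sum_distrib_left)
    finally show ?thesis using row_off[OF that] thsg[OF that] by simp
  qed
  have w_zero: "w i j = 0" if "n < j" for i j
    unfolding w_def using io_zero that by simp
  have sumSuc: "(\<Sum>i\<le>Suc m. f i) = (\<Sum>i\<le>m. f i) + (f (Suc m) :: real)" for f by simp
  have zplan: "z \<in> transport_plans p (Suc m) n"
    unfolding transport_plans_def
  proof (intro CollectI conjI allI impI)
    fix i j assume "Suc m < i \<or> n < j"
    then show "z i j = 0" unfolding z_def using io_zero w_zero by auto
  next
    fix i j assume "i \<le> Suc m" "j \<le> n"
    show "0 \<le> z i j" unfolding z_def using w_le w_nonneg by (auto intro: sum_nonneg)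
  next
    fix i assume i: "i \<le> Suc m"
    show "(\<Sum>j\<le>n. z i j) = p (Suc m) i"
    proof (cases "i \<le> m")
      case True
      have "(\<Sum>j\<le>n. z i j) = (\<Sum>j\<le>n. io i j) - (\<Sum>j\<le>n. w i j)"
        unfolding z_def using True by (simp add: sum_subtractf)
      then show ?thesis using row_sum[OF True] w_row[OF True] by simp
    next
      case False
      then have im: "i = Suc m" using i by simp
      have "(\<Sum>j\<le>n. z i j) = (\<Sum>j\<le>n. \<Sum>k\<le>m. w k j)" unfolding z_def using im by simp
      also have "\<dots> = (\<Sum>k\<le>m. \<Sum>j\<le>n. w k j)" by (rule sum.swap)
      also have "\<dots> = (\<Sum>k\<le>m. p m k - p (Suc m) k)" by (rule sum.cong) (simp_all add: w_row)
      also have "\<dots> = 1 - (\<Sum>k\<le>m. p (Suc m) k)" using sum1[of m] by (simp add: sum_subtractf)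
      also have "\<dots> = p (Suc m) (Suc m)" using sum1[of "Suc m"] by simp
      finally show ?thesis using im by simp
    qed
  next
    fix j assume j: "j \<le> n"
    have "(\<Sum>i\<le>Suc m. z i j) = (\<Sum>i\<le>m. io i j - w i j) + (\<Sum>k\<le>m. w k j)"
      unfolding sumSuc z_def by simp
    also have "\<dots> = (\<Sum>i\<le>m. io i j)" by (simp add: sum_subtractf)
    finally show "(\<Sum>i\<le>Suc m. z i j) = p n j" using col_sum[OF j] by simp
  qed
  have "(\<Sum>i\<le>Suc m. \<Sum>j\<le>n. z i j * c i j)
      = (\<Sum>i\<le>m. \<Sum>j\<le>n. (io i j - w i j) * c i j) + (\<Sum>j\<le>n. (\<Sum>k\<le>m. w k j) * c (Suc m) j)"
    unfolding sumSuc z_def by simp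
  also have "\<dots> = cost c io - (\<Sum>i\<le>m. \<Sum>j\<le>n. w i j * c i j) + (\<Sum>i\<le>m. \<Sum>j\<le>n. w i j * c (Suc m) j)"
  proof -
    have "(\<Sum>i\<le>m. \<Sum>j\<le>n. (io i j - w i j) * c i j) = cost c io - (\<Sum>i\<le>m. \<Sum>j\<le>n. w i j * c i j)"
      unfolding cost_def by (simp add: left_diff_distrib sum_subtractf)
    moreover have "(\<Sum>j\<le>n. (\<Sum>k\<le>m. w k j) * c (Suc m) j) = (\<Sum>i\<le>m. \<Sum>j\<le>n. w i j * c (Suc m) j)"
      by (simp add: sum_distrib_right) (rule sum.swap)
    ultimately show ?thesis by simp
  qed
  also have "\<dots> \<le> cost c io"
  proof -
    have "(\<Sum>i\<le>m. \<Sum>j\<le>n. w i j * c (Suc m) j) \<le> (\<Sum>i\<le>m. \<Sum>j\<le>n. w i j * c i j)"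
    proof (intro sum_mono)
      fix i j assume i: "i \<in> {..m}" and j: "j \<in> {..n}"
      show "w i j * c (Suc m) j \<le> w i j * c i j"
      proof (cases "m < j")
        case True
        then show ?thesis using cM[of i j] i j w_nonneg[of i j] by (intro mult_left_mono) auto
      next
        case False
        then show ?thesis unfolding w_def by simp
      qed
    qed
    then show ?thesis by simp
  qed
  finally show ?thesis using zplan by blast
qed

end

lemma min4:
  fixes A A' g g' b b' :: real
  assumes "A' \<le> A" "g' \<le> g" "b \<le> b'" "g - g' \<le> b' - b \<or> (b = 0 \<and> b' = 0 \<and> g \<le> A')"
  shows "min (A - g) b + min (A' - g') b' \<le> min (A - g') b' + min (A' - g) b"
  using assms by (auto simp: min_def)

context iosetup begin

lemma Pdiff: assumes "x \<le> y" "y \<le> k" "k \<le> l" shows "P l y - P l x \<le> P k y - P k x"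
proof -
  have s: "P q y - P q x = (\<Sum>i\<in>{x<..y}. p q i)" for q
  proof -
    have e: "{..y} = {..x} \<union> {x<..y}" using assms by auto
    have "sum (p q) ({..x} \<union> {x<..y}) = sum (p q) {..x} + sum (p q) {x<..y}"
      by (rule sum.union_disjoint) auto
    then have "P q y = P q x + (\<Sum>i\<in>{x<..y}. p q i)" unfolding P_def using e by simp
    then show ?thesis by simp
  qed
  show ?thesis unfolding s by (rule sum_mono) (use assms mono in auto)
qed

lemma T_ineq:
  assumes mn1: "Suc m \<le> n" and xy: "x < y"
  shows "min (P m (min x m) - P n (min x m)) (1 - P n (max y m))
       + min (P (Suc m) (min x (Suc m)) - P (Suc n) (min x (Suc m))) (1 - P (Suc n) (max y (Suc m)))
       \<le> min (P m (min x m) - P (Suc n) (min x m)) (1 - P (Suc n) (max y m))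
       + min (P (Suc m) (min x (Suc m)) - P n (min x (Suc m))) (1 - P n (max y (Suc m)))"
proof (cases "Suc m \<le> x")
  case True
  then have e: "min x m = m" "min x (Suc m) = Suc m" "max y m = y" "max y (Suc m) = y" using xy by auto
  have f: "P k m \<le> P k y" "P k (Suc m) \<le> P k y" for k using P_mono xy True by auto
  have g1: "min (P m m - P k m) (1 - P k y) = 1 - P k y" for k
    using P_full[of m m] f[of k] by (simp add: min_def)
  have g2: "min (P (Suc m) (Suc m) - P k (Suc m)) (1 - P k y) = 1 - P k y" for k
    using P_full[of "Suc m" "Suc m"] f[of k] by (simp add: min_def)
  show ?thesis unfolding e g1 g2 by simp
next
  case False
  then have xm: "x \<le> m" by simp
  show ?thesis
  proof (cases "Suc m \<le> y")
    case True
    then have e: "min x m = x" "min x (Suc m) = x" "max y m = y" "max y (Suc m) = y" using xm by auto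
    show ?thesis unfolding e
    proof (rule min4)
      show "P (Suc m) x \<le> P m x" by (rule P_anti) simp
      show "P (Suc n) x \<le> P n x" by (rule P_anti) simp
      show "1 - P n y \<le> 1 - P (Suc n) y" using P_anti[of n "Suc n" y] by simp
      show "P n x - P (Suc n) x \<le> 1 - P (Suc n) y - (1 - P n y) \<or>
            (1 - P n y = 0 \<and> 1 - P (Suc n) y = 0 \<and> P n x \<le> P (Suc m) x)"
      proof (cases "y \<le> n")
        case True
        then show ?thesis using Pdiff[of x y n "Suc n"] xy by simp
      next
        case False
        then show ?thesis using P_full[of n y] P_full[of "Suc n" y] P_anti[of "Suc m" n x] mn1 by simp
      qed
    qed
  next
    case False
    then have e: "min x m = x" "min x (Suc m) = x" "max y m = m" "max y (Suc m) = Suc m" using xm xy by auto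
    have a1: "P m x - P k x \<le> 1 - P k m" if "m \<le> k" for k
      using Pdiff[of x m m k] P_full[of m m] that xm by simp
    have a2: "P (Suc m) x - P k x \<le> 1 - P k (Suc m)" if "Suc m \<le> k" for k
      using Pdiff[of x "Suc m" "Suc m" k] P_full[of "Suc m" "Suc m"] that xm by simp
    show ?thesis unfolding e using a1[of n] a1[of "Suc n"] a2[of n] a2[of "Suc n"] mn1 mn1
      by (simp add: min_def)
  qed
qed

end

definition Dl :: "(nat \<Rightarrow> nat \<Rightarrow> real) \<Rightarrow> nat \<Rightarrow> nat \<Rightarrow> real" where
  "Dl c x y = c x (Suc y) - c (Suc x) (Suc y) - c x y + c (Suc x) y"

lemma tele2: "(i::nat) \<le> k \<Longrightarrow> (\<Sum>r\<in>{i..<k}. f r - f (Suc r)) = f i - (f k :: real)"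
proof (induction k rule: dec_induct)
  case base then show ?case by simp
next
  case (step k) then show ?case by simp
qed

lemma expand:
  fixes c :: "nat \<Rightarrow> nat \<Rightarrow> real"
  assumes diag: "\<And>k. k \<le> N \<Longrightarrow> c k k = 0" and ij: "i \<le> j" "j \<le> N"
  shows "c i j = (\<Sum>a<N. if i \<le> a \<and> a < j then c a (Suc a) else 0)
               + (\<Sum>x<N. \<Sum>y<N. if i \<le> x \<and> x < y \<and> y < j then Dl c x y else 0)"
  using ij
proof (induction j rule: dec_induct)
  case base
  have "(\<Sum>a<N. if i \<le> a \<and> a < i then c a (Suc a) else 0) = 0" by (rule sum.neutral) auto
  moreover have "(\<Sum>x<N. \<Sum>y<N. if i \<le> x \<and> x < y \<and> y < i then Dl c x y else 0) = 0"
    by (intro sum.neutral ballI) auto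
  ultimately show ?case using diag base by simp
next
  case (step j)
  have jN: "j < N" using step by simp
  have E: "(\<Sum>a<N. if i \<le> a \<and> a < Suc j then c a (Suc a) else 0)
        = (\<Sum>a<N. if i \<le> a \<and> a < j then c a (Suc a) else 0) + c j (Suc j)"
  proof -
    have "(\<Sum>a<N. if i \<le> a \<and> a < Suc j then c a (Suc a) else 0)
        = (\<Sum>a<N. (if i \<le> a \<and> a < j then c a (Suc a) else 0) + (if a = j then c a (Suc a) else 0))"
      by (rule sum.cong) (use step.hyps in auto)
    also have "\<dots> = (\<Sum>a<N. if i \<le> a \<and> a < j then c a (Suc a) else 0) + c j (Suc j)"
      using jN by (simp add: sum.distrib)
    finally show ?thesis .
  qed
  have G: "(\<Sum>x<N. \<Sum>y<N. if i \<le> x \<and> x < y \<and> y < Suc j then Dl c x y else 0)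
        = (\<Sum>x<N. \<Sum>y<N. if i \<le> x \<and> x < y \<and> y < j then Dl c x y else 0) + (\<Sum>x\<in>{i..<j}. Dl c x j)"
  proof -
    have "(\<Sum>x<N. \<Sum>y<N. if i \<le> x \<and> x < y \<and> y < Suc j then Dl c x y else 0)
        = (\<Sum>x<N. (\<Sum>y<N. if i \<le> x \<and> x < y \<and> y < j then Dl c x y else 0) + (if i \<le> x \<and> x < j then Dl c x j else 0))"
    proof (rule sum.cong[OF refl])
      fix x assume x: "x \<in> {..<N}"
      have "(\<Sum>y<N. if i \<le> x \<and> x < y \<and> y < Suc j then Dl c x y else 0)
          = (\<Sum>y<N. (if i \<le> x \<and> x < y \<and> y < j then Dl c x y else 0) + (if y = j then (if i \<le> x \<and> x < j then Dl c x j else 0) else 0))"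
        by (rule sum.cong) auto
      also have "\<dots> = (\<Sum>y<N. if i \<le> x \<and> x < y \<and> y < j then Dl c x y else 0) + (if i \<le> x \<and> x < j then Dl c x j else 0)"
        using jN by (simp add: sum.distrib)
      finally show "(\<Sum>y<N. if i \<le> x \<and> x < y \<and> y < Suc j then Dl c x y else 0)
          = (\<Sum>y<N. if i \<le> x \<and> x < y \<and> y < j then Dl c x y else 0) + (if i \<le> x \<and> x < j then Dl c x j else 0)" .
    qed
    also have "\<dots> = (\<Sum>x<N. \<Sum>y<N. if i \<le> x \<and> x < y \<and> y < j then Dl c x y else 0) + (\<Sum>x<N. if i \<le> x \<and> x < j then Dl c x j else 0)"
      by (simp add: sum.distrib)
    also have "(\<Sum>x<N. if i \<le> x \<and> x < j then Dl c x j else 0) = (\<Sum>x\<in>{i..<j}. Dl c x j)"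
    proof -
      have "(\<Sum>x<N. if i \<le> x \<and> x < j then Dl c x j else 0) = (\<Sum>x\<in>{x\<in>{..<N}. i \<le> x \<and> x < j}. Dl c x j)"
        by (rule sum.inter_filter[symmetric]) simp
      also have "{x\<in>{..<N}. i \<le> x \<and> x < j} = {i..<j}" using jN by auto
      finally show ?thesis .
    qed
    finally show ?thesis .
  qed
  have tel: "(\<Sum>x\<in>{i..<j}. Dl c x j) = c i (Suc j) - c j (Suc j) - c i j + c j j"
  proof -
    have "(\<Sum>x\<in>{i..<j}. Dl c x j) = (\<Sum>x\<in>{i..<j}. c x (Suc j) - c (Suc x) (Suc j)) - (\<Sum>x\<in>{i..<j}. c x j - c (Suc x) j)"
      unfolding Dl_def by (simp add: sum_subtractf[symmetric] algebra_simps)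
    also have "\<dots> = (c i (Suc j) - c j (Suc j)) - (c i j - c j j)"
      using tele2[OF step.hyps(1), of "\<lambda>x. c x (Suc j)"] tele2[OF step.hyps(1), of "\<lambda>x. c x j"] by simp
    finally show ?thesis by simp
  qed
  show ?case using step.IH jN E G tel diag[of j] by simp
qed

lemma swap3:
  fixes z :: "nat \<Rightarrow> nat \<Rightarrow> real"
  shows "(\<Sum>i\<in>A. \<Sum>j\<in>B. z i j * (\<Sum>a\<in>C. if Q i j a then f a else 0))
       = (\<Sum>a\<in>C. f a * (\<Sum>i\<in>A. \<Sum>j\<in>B. if Q i j a then z i j else 0))"
proof -
  have "(\<Sum>i\<in>A. \<Sum>j\<in>B. z i j * (\<Sum>a\<in>C. if Q i j a then f a else 0))
      = (\<Sum>i\<in>A. \<Sum>j\<in>B. \<Sum>a\<in>C. f a * (if Q i j a then z i j else 0))"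
    by (simp add: sum_distrib_left if_distrib mult.commute cong: if_cong)
  also have "\<dots> = (\<Sum>i\<in>A. \<Sum>a\<in>C. \<Sum>j\<in>B. f a * (if Q i j a then z i j else 0))"
    by (rule sum.cong[OF refl]) (rule sum.swap)
  also have "\<dots> = (\<Sum>a\<in>C. \<Sum>i\<in>A. \<Sum>j\<in>B. f a * (if Q i j a then z i j else 0))"
    by (rule sum.swap)
  also have "\<dots> = (\<Sum>a\<in>C. f a * (\<Sum>i\<in>A. \<Sum>j\<in>B. if Q i j a then z i j else 0))"
    by (simp add: sum_distrib_left)
  finally show ?thesis .
qed

lemma swapg:
  fixes z :: "nat \<Rightarrow> nat \<Rightarrow> real"
  shows "(\<Sum>i\<in>A. \<Sum>j\<in>B. z i j * (\<Sum>a\<in>C. h i j a)) = (\<Sum>a\<in>C. \<Sum>i\<in>A. \<Sum>j\<in>B. z i j * h i j a)"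
proof -
  have "(\<Sum>i\<in>A. \<Sum>j\<in>B. z i j * (\<Sum>a\<in>C. h i j a)) = (\<Sum>i\<in>A. \<Sum>j\<in>B. \<Sum>a\<in>C. z i j * h i j a)"
    by (simp add: sum_distrib_left)
  also have "\<dots> = (\<Sum>i\<in>A. \<Sum>a\<in>C. \<Sum>j\<in>B. z i j * h i j a)"
    by (rule sum.cong[OF refl]) (rule sum.swap)
  also have "\<dots> = (\<Sum>a\<in>C. \<Sum>i\<in>A. \<Sum>j\<in>B. z i j * h i j a)"
    by (rule sum.swap)
  finally show ?thesis .
qed

lemma filt2:
  fixes z :: "nat \<Rightarrow> nat \<Rightarrow> real"
  assumes "a \<le> N" "b \<le> N"
  shows "(\<Sum>i\<le>N. \<Sum>j\<le>N. if i \<le> a \<and> b < j then z i j else 0) = (\<Sum>i\<le>a. \<Sum>j\<in>{b<..N}. z i j)"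
proof -
  have inner: "(\<Sum>j\<le>N. if i \<le> a \<and> b < j then z i j else 0) = (if i \<le> a then (\<Sum>j\<in>{b<..N}. z i j) else 0)" for i
  proof (cases "i \<le> a")
    case True
    have "(\<Sum>j\<le>N. if b < j then z i j else 0) = (\<Sum>j\<in>{j\<in>{..N}. b < j}. z i j)"
      by (rule sum.inter_filter[symmetric]) simp
    also have "{j\<in>{..N}. b < j} = {b<..N}" by auto
    finally show ?thesis using True by simp
  next
    case False then show ?thesis by simp
  qed
  have "(\<Sum>i\<le>N. \<Sum>j\<le>N. if i \<le> a \<and> b < j then z i j else 0) = (\<Sum>i\<le>N. if i \<le> a then (\<Sum>j\<in>{b<..N}. z i j) else 0)"
    using inner by simp
  also have "\<dots> = (\<Sum>i\<in>{i\<in>{..N}. i \<le> a}. \<Sum>j\<in>{b<..N}. z i j)"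
    by (rule sum.inter_filter[symmetric]) simp
  also have "{i\<in>{..N}. i \<le> a} = {..a}" using assms by auto
  finally show ?thesis .
qed

lemma cost_repr:
  fixes c z :: "nat \<Rightarrow> nat \<Rightarrow> real"
  assumes diag: "\<And>k. k \<le> N \<Longrightarrow> c k k = 0" and upper: "\<And>i j. j < i \<Longrightarrow> z i j = 0"
  shows "(\<Sum>i\<le>N. \<Sum>j\<le>N. z i j * c i j)
       = (\<Sum>a<N. c a (Suc a) * (\<Sum>i\<le>a. \<Sum>j\<in>{a<..N}. z i j))
       + (\<Sum>x<N. \<Sum>y<N. Dl c x y * (if x < y then (\<Sum>i\<le>x. \<Sum>j\<in>{y<..N}. z i j) else 0))"
proof -
  define E where "E i j = (\<Sum>a<N. if i \<le> a \<and> a < j then c a (Suc a) else 0)" for i j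
  define G where "G i j = (\<Sum>x<N. \<Sum>y<N. if i \<le> x \<and> x < y \<and> y < j then Dl c x y else 0)" for i j
  have pt: "z i j * c i j = z i j * E i j + z i j * G i j" if "i \<le> N" "j \<le> N" for i j
  proof (cases "i \<le> j")
    case True
    have "c i j = E i j + G i j" unfolding E_def G_def
      by (rule expand[where c=c and N=N and i=i and j=j]) (use diag True that(2) in auto)
    then show ?thesis by (simp add: distrib_left)
  next
    case False then show ?thesis using upper by simp
  qed
  have "(\<Sum>i\<le>N. \<Sum>j\<le>N. z i j * c i j) = (\<Sum>i\<le>N. \<Sum>j\<le>N. z i j * E i j) + (\<Sum>i\<le>N. \<Sum>j\<le>N. z i j * G i j)"
    using pt by (simp add: sum.distrib)
  also have "(\<Sum>i\<le>N. \<Sum>j\<le>N. z i j * E i j) = (\<Sum>a<N. c a (Suc a) * (\<Sum>i\<le>a. \<Sum>j\<in>{a<..N}. z i j))"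
  proof -
    have "(\<Sum>i\<le>N. \<Sum>j\<le>N. z i j * E i j) = (\<Sum>a<N. c a (Suc a) * (\<Sum>i\<le>N. \<Sum>j\<le>N. if i \<le> a \<and> a < j then z i j else 0))"
      unfolding E_def by (rule swap3)
    also have "\<dots> = (\<Sum>a<N. c a (Suc a) * (\<Sum>i\<le>a. \<Sum>j\<in>{a<..N}. z i j))"
      by (rule sum.cong[OF refl]) (simp add: filt2)
    finally show ?thesis .
  qed
  also have "(\<Sum>i\<le>N. \<Sum>j\<le>N. z i j * G i j) = (\<Sum>x<N. \<Sum>y<N. Dl c x y * (if x < y then (\<Sum>i\<le>x. \<Sum>j\<in>{y<..N}. z i j) else 0))"
  proof -
    have "(\<Sum>i\<le>N. \<Sum>j\<le>N. z i j * G i j) = (\<Sum>x<N. \<Sum>i\<le>N. \<Sum>j\<le>N. z i j * (\<Sum>y<N. if i \<le> x \<and> x < y \<and> y < j then Dl c x y else 0))"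
      unfolding G_def by (rule swapg)
    also have "\<dots> = (\<Sum>x<N. \<Sum>y<N. \<Sum>i\<le>N. \<Sum>j\<le>N. z i j * (if i \<le> x \<and> x < y \<and> y < j then Dl c x y else 0))"
      by (rule sum.cong[OF refl]) (rule swapg)
    also have "\<dots> = (\<Sum>x<N. \<Sum>y<N. Dl c x y * (if x < y then (\<Sum>i\<le>x. \<Sum>j\<in>{y<..N}. z i j) else 0))"
    proof (intro sum.cong refl)
      fix x y assume x: "x \<in> {..<N}" and y: "y \<in> {..<N}"
      show "(\<Sum>i\<le>N. \<Sum>j\<le>N. z i j * (if i \<le> x \<and> x < y \<and> y < j then Dl c x y else 0))
          = Dl c x y * (if x < y then (\<Sum>i\<le>x. \<Sum>j\<in>{y<..N}. z i j) else 0)"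
      proof (cases "x < y")
        case True
        have "(\<Sum>i\<le>N. \<Sum>j\<le>N. z i j * (if i \<le> x \<and> x < y \<and> y < j then Dl c x y else 0))
            = Dl c x y * (\<Sum>i\<le>N. \<Sum>j\<le>N. if i \<le> x \<and> y < j then z i j else 0)"
          using True by (simp add: sum_distrib_left if_distrib mult.commute cong: if_cong)
        also have "\<dots> = Dl c x y * (\<Sum>i\<le>x. \<Sum>j\<in>{y<..N}. z i j)"
          using x y by (simp add: filt2)
        finally show ?thesis using True by simp
      next
        case False then show ?thesis by simp
      qed
    qed
    finally show ?thesis .
  qed
  finally show ?thesis .
qed

definition Cst :: "(nat \<Rightarrow> nat \<Rightarrow> real) \<Rightarrow> nat \<Rightarrow> nat \<Rightarrow> (nat \<Rightarrow> nat \<Rightarrow> real) \<Rightarrow> real" where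
  "Cst p a b c = (\<Sum>i\<le>a. \<Sum>j\<le>b. inside_out p a b i j * c i j)"

definition Tf :: "(nat \<Rightarrow> nat \<Rightarrow> real) \<Rightarrow> nat \<Rightarrow> nat \<Rightarrow> nat \<Rightarrow> nat \<Rightarrow> real" where
  "Tf p a b x y = (if x < y then min (iosetup.P p a (min x a) - iosetup.P p b (min x a)) (1 - iosetup.P p b (max y a)) else 0)"

context iosetup begin

lemma iomn_I: "a \<le> b \<Longrightarrow> iomn p a b"
  by (simp add: iomn_def iomn_axioms_def iosetup_axioms)

lemma Cst_repr:
  fixes c :: "nat \<Rightarrow> nat \<Rightarrow> real"
  assumes ab: "a \<le> b" "b \<le> N" and diag: "\<And>k. k \<le> N \<Longrightarrow> c k k = 0"
  shows "Cst p a b c = (\<Sum>a'<N. c a' (Suc a') * (P a a' - P b a')) + (\<Sum>x<N. \<Sum>y<N. Dl c x y * Tf p a b x y)"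
proof -
  interpret A: iomn p a b by (rule iomn_I) fact
  have box: "Cst p a b c = (\<Sum>i\<le>N. \<Sum>j\<le>N. inside_out p a b i j * c i j)"
  proof -
    have "Cst p a b c = (\<Sum>i\<le>a. \<Sum>j\<le>N. inside_out p a b i j * c i j)"
      unfolding Cst_def
      by (rule sum.cong[OF refl], rule sum.mono_neutral_left) (use ab A.io_zero in auto)
    also have "\<dots> = (\<Sum>i\<le>N. \<Sum>j\<le>N. inside_out p a b i j * c i j)"
      by (rule sum.mono_neutral_left) (use ab A.io_zero in auto)
    finally show ?thesis .
  qed
  have "Cst p a b c = (\<Sum>a'<N. c a' (Suc a') * (\<Sum>i\<le>a'. \<Sum>j\<in>{a'<..N}. inside_out p a b i j))
       + (\<Sum>x<N. \<Sum>y<N. Dl c x y * (if x < y then (\<Sum>i\<le>x. \<Sum>j\<in>{y<..N}. inside_out p a b i j) else 0))"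
    unfolding box by (rule cost_repr) (use diag A.io_lower in auto)
  also have "(\<Sum>a'<N. c a' (Suc a') * (\<Sum>i\<le>a'. \<Sum>j\<in>{a'<..N}. inside_out p a b i j)) = (\<Sum>a'<N. c a' (Suc a') * (P a a' - P b a'))"
    by (rule sum.cong[OF refl]) (use A.L_io ab in simp)
  also have "(\<Sum>x<N. \<Sum>y<N. Dl c x y * (if x < y then (\<Sum>i\<le>x. \<Sum>j\<in>{y<..N}. inside_out p a b i j) else 0))
      = (\<Sum>x<N. \<Sum>y<N. Dl c x y * Tf p a b x y)"
    unfolding Tf_def by (intro sum.cong refl) (use A.T_io ab in auto)
  finally show ?thesis .
qed

lemma main_ineq:
  fixes c :: "nat \<Rightarrow> nat \<Rightarrow> real"
  assumes mn1: "Suc m \<le> n"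
    and diag: "\<And>k. k \<le> Suc n \<Longrightarrow> c k k = 0"
    and DlQ: "\<And>x y. x < y \<Longrightarrow> y \<le> n \<Longrightarrow> Dl c x y \<le> 0"
  shows "Cst p m (Suc n) c + Cst p (Suc m) n c \<le> Cst p m n c + Cst p (Suc m) (Suc n) c"
proof -
  let ?N = "Suc n"
  note r1 = Cst_repr[of m "Suc n" ?N c] and r2 = Cst_repr[of "Suc m" n ?N c]
   and r3 = Cst_repr[of m n ?N c] and r4 = Cst_repr[of "Suc m" "Suc n" ?N c]
  define ES where "ES a b = (\<Sum>a'<?N. c a' (Suc a') * (P a a' - P b a'))" for a b
  define DS where "DS a b = (\<Sum>x<?N. \<Sum>y<?N. Dl c x y * Tf p a b x y)" for a b
  have c1: "Cst p m (Suc n) c = ES m (Suc n) + DS m (Suc n)" unfolding ES_def DS_def by (rule r1) (use mn1 diag in auto)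
  have c2: "Cst p (Suc m) n c = ES (Suc m) n + DS (Suc m) n" unfolding ES_def DS_def by (rule r2) (use mn1 diag in auto)
  have c3: "Cst p m n c = ES m n + DS m n" unfolding ES_def DS_def by (rule r3) (use mn1 diag in auto)
  have c4: "Cst p (Suc m) (Suc n) c = ES (Suc m) (Suc n) + DS (Suc m) (Suc n)" unfolding ES_def DS_def by (rule r4) (use mn1 diag in auto)
  have es: "ES m (Suc n) + ES (Suc m) n = ES m n + ES (Suc m) (Suc n)"
  proof -
    have "ES m (Suc n) + ES (Suc m) n = (\<Sum>a'<?N. c a' (Suc a') * (P m a' - P (Suc n) a') + c a' (Suc a') * (P (Suc m) a' - P n a'))"
      unfolding ES_def by (simp only: sum.distrib)
    also have "\<dots> = (\<Sum>a'<?N. c a' (Suc a') * (P m a' - P n a') + c a' (Suc a') * (P (Suc m) a' - P (Suc n) a'))"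
      by (rule sum.cong[OF refl]) (simp add: algebra_simps)
    also have "\<dots> = ES m n + ES (Suc m) (Suc n)"
      unfolding ES_def by (simp only: sum.distrib)
    finally show ?thesis .
  qed
  have ds: "DS m (Suc n) + DS (Suc m) n - DS m n - DS (Suc m) (Suc n)
     = (\<Sum>x<?N. \<Sum>y<?N. Dl c x y * (Tf p m (Suc n) x y + Tf p (Suc m) n x y - Tf p m n x y - Tf p (Suc m) (Suc n) x y))"
    unfolding DS_def by (simp only: sum.distrib[symmetric] sum_subtractf[symmetric] distrib_left right_diff_distrib)
  have e: "Cst p m (Suc n) c + Cst p (Suc m) n c - Cst p m n c - Cst p (Suc m) (Suc n) c
     = (\<Sum>x<?N. \<Sum>y<?N. Dl c x y * (Tf p m (Suc n) x y + Tf p (Suc m) n x y - Tf p m n x y - Tf p (Suc m) (Suc n) x y))"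
    using c1 c2 c3 c4 es ds by simp
  have "(\<Sum>x<?N. \<Sum>y<?N. Dl c x y * (Tf p m (Suc n) x y + Tf p (Suc m) n x y - Tf p m n x y - Tf p (Suc m) (Suc n) x y)) \<le> 0"
  proof (intro sum_nonpos)
    fix x y assume x: "x \<in> {..<?N}" and y: "y \<in> {..<?N}"
    show "Dl c x y * (Tf p m (Suc n) x y + Tf p (Suc m) n x y - Tf p m n x y - Tf p (Suc m) (Suc n) x y) \<le> 0"
    proof (cases "x < y")
      case True
      have "0 \<le> Tf p m (Suc n) x y + Tf p (Suc m) n x y - Tf p m n x y - Tf p (Suc m) (Suc n) x y"
        using T_ineq[OF mn1 True] True unfolding Tf_def by simp
      moreover have "Dl c x y \<le> 0" using DlQ True y by simp
      ultimately show ?thesis by (simp add: mult_nonpos_nonneg)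
    next
      case False then show ?thesis unfolding Tf_def by simp
    qed
  qed
  then show ?thesis using e by simp
qed

end

context iosetup begin

lemma plans_ne: "transport_plans p m n \<noteq> {}"
proof -
  define z where "z i j = (if i \<le> m \<and> j \<le> n then p m i * p n j else 0)" for i j
  have "z \<in> transport_plans p m n"
    unfolding transport_plans_def z_def
    by (auto simp: nonneg sum1 sum_distrib_left[symmetric] sum_distrib_right[symmetric])
  then show ?thesis by blast
qed

lemma D_nonneg: "0 \<le> D p a b"
proof (induction "a + b" arbitrary: a b rule: less_induct)
  case less
  show ?case
  proof (cases a)
    case 0 then show ?thesis by (cases b) auto
  next
    case (Suc m)
    show ?thesis
    proof (cases b)
      case 0 then show ?thesis using Suc by simp
    next
      case (Suc n)
      have "0 \<le> Inf ((\<lambda>z. \<Sum>i\<le>m. \<Sum>j\<le>n. z i j * D p i j) ` transport_plans p m n)"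
      proof (rule cInf_greatest)
        show "(\<lambda>z. \<Sum>i\<le>m. \<Sum>j\<le>n. z i j * D p i j) ` transport_plans p m n \<noteq> {}" using plans_ne by simp
        fix x assume "x \<in> (\<lambda>z. \<Sum>i\<le>m. \<Sum>j\<le>n. z i j * D p i j) ` transport_plans p m n"
        then obtain z where z: "z \<in> transport_plans p m n" "x = (\<Sum>i\<le>m. \<Sum>j\<le>n. z i j * D p i j)" by auto
        have "0 \<le> (\<Sum>i\<le>m. \<Sum>j\<le>n. z i j * D p i j)"
        proof (intro sum_nonneg mult_nonneg_nonneg)
          fix i j assume "i \<in> {..m}" "j \<in> {..n}"
          then show "0 \<le> z i j" using z unfolding transport_plans_def by auto
          show "0 \<le> D p i j" using less \<open>a = Suc m\<close> \<open>b = Suc n\<close> \<open>i \<in> {..m}\<close> \<open>j \<in> {..n}\<close> by simp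
        qed
        then show "0 \<le> x" using z by simp
      qed
      then show ?thesis using \<open>a = Suc m\<close> Suc by simp
    qed
  qed
qed

definition Inv :: "nat \<Rightarrow> bool" where
  "Inv N \<longleftrightarrow> (\<forall>k\<le>N. D p k k = 0) \<and> (\<forall>x y. x \<le> y \<longrightarrow> y \<le> N \<longrightarrow> D p x y \<le> 1)
     \<and> (\<forall>x y. Suc x \<le> y \<longrightarrow> y \<le> N \<longrightarrow> D p (Suc x) y \<le> D p x y)
     \<and> (\<forall>x y. x < y \<longrightarrow> Suc y \<le> N \<longrightarrow> Dl (D p) x y \<le> 0)"

lemma Qcol: assumes "Inv N" "a \<le> b" "b \<le> e" "Suc e \<le> N"
  shows "D p a (Suc e) - D p b (Suc e) \<le> D p a e - D p b e"
  using assms(2,3)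
proof (induction b rule: dec_induct)
  case base then show ?case by simp
next
  case (step b)
  have "Dl (D p) b e \<le> 0" using assms(1,4) step unfolding Inv_def by auto
  then show ?case using step unfolding Dl_def by simp
qed

lemma Qfull: assumes "Inv N" "a \<le> b" "b \<le> c" "c \<le> e" "e \<le> N"
  shows "D p a e + D p b c \<le> D p a c + D p b e"
  using assms(4,5)
proof (induction e rule: dec_induct)
  case base then show ?case by simp
next
  case (step e)
  have "D p a (Suc e) - D p b (Suc e) \<le> D p a e - D p b e"
    using Qcol[OF assms(1,2)] assms(3) step by simp
  then show ?case using step by simp
qed

lemma Mfull: assumes "Inv N" "a \<le> b" "b \<le> e" "e \<le> N"
  shows "D p b e \<le> D p a e"
  using assms(2,3)
proof (induction b rule: dec_induct)
  case base then show ?case by simp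
next
  case (step b)
  have "D p (Suc b) e \<le> D p b e" using assms(1,4) step unfolding Inv_def by auto
  then show ?case using step by simp
qed

lemma opt:
  assumes inv: "Inv n" and mn: "m \<le> n"
  shows "D p (Suc m) (Suc n) = Cst p m n (D p)"
    "\<And>z. z \<in> transport_plans p m n \<Longrightarrow> Cst p m n (D p) \<le> (\<Sum>i\<le>m. \<Sum>j\<le>n. z i j * D p i j)"
proof -
  interpret A: iomn p m n by (rule iomn_I) fact
  have le: "Cst p m n (D p) \<le> (\<Sum>i\<le>m. \<Sum>j\<le>n. z i j * D p i j)" if z: "z \<in> transport_plans p m n" for z
  proof -
    have "A.cost (D p) (inside_out p m n) \<le> A.cost (D p) z"
    proof (rule A.dual_opt)
      show "0 \<le> D p i j" for i j by (rule D_nonneg)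
      show "D p i i = 0" if "i \<le> m" for i using inv that mn unfolding Inv_def by auto
      show "D p r j' - D p (Suc r) j' \<le> D p r j - D p (Suc r) j" if "Suc r \<le> j" "j \<le> j'" "j' \<le> n" for r j j'
        using Qfull[OF inv, of r "Suc r" j j'] that by simp
      show "D p (Suc r) j \<le> D p r j" if "Suc r \<le> j" "j \<le> n" for r j
        using Mfull[OF inv, of r "Suc r" j] that by simp
    qed fact
    then show ?thesis unfolding A.cost_def Cst_def .
  qed
  then show "\<And>z. z \<in> transport_plans p m n \<Longrightarrow> Cst p m n (D p) \<le> (\<Sum>i\<le>m. \<Sum>j\<le>n. z i j * D p i j)" .
  show "D p (Suc m) (Suc n) = Cst p m n (D p)"
    unfolding D.simps
  proof (rule cInf_eq_minimum)
    show "Cst p m n (D p) \<in> (\<lambda>z. \<Sum>i\<le>m. \<Sum>j\<le>n. z i j * D p i j) ` transport_plans p m n"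
      unfolding Cst_def using A.io_plan by blast
    fix x assume "x \<in> (\<lambda>z. \<Sum>i\<le>m. \<Sum>j\<le>n. z i j * D p i j) ` transport_plans p m n"
    then show "Cst p m n (D p) \<le> x" using le by auto
  qed
qed

end

declare D.simps(4)[simp del]

context iosetup begin

lemma Cst_diag: assumes "Inv N" shows "Cst p N N (D p) = 0"
proof -
  interpret A: iomn p N N by (rule iomn_I) simp
  have "inside_out p N N i j * D p i j = 0" if "i \<le> N" "j \<le> N" for i j
    using A.io_diag[OF that] assms that unfolding Inv_def by auto
  then show ?thesis unfolding Cst_def by (intro sum.neutral ballI) simp
qed

lemma Cst_le1: assumes "Inv n" "m \<le> n" shows "Cst p m n (D p) \<le> 1"
proof -
  interpret A: iomn p m n by (rule iomn_I) fact
  have "Cst p m n (D p) \<le> (\<Sum>i\<le>m. \<Sum>j\<le>n. inside_out p m n i j)"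
    unfolding Cst_def
  proof (intro sum_mono)
    fix i j assume i: "i \<in> {..m}" and j: "j \<in> {..n}"
    show "inside_out p m n i j * D p i j \<le> inside_out p m n i j"
    proof (cases "j < i")
      case True then show ?thesis using A.io_lower by simp
    next
      case False
      then have "D p i j \<le> 1" using assms(1) j unfolding Inv_def by auto
      then show ?thesis using A.io_nonneg[of i j] by (simp add: mult_left_le)
    qed
  qed
  also have "\<dots> = (\<Sum>i\<le>m. p m i)" using A.row_sum by simp
  finally show ?thesis using sum1 by simp
qed

lemma Cst_0: "Cst p 0 k (D p) = 1 - p k 0"
proof -
  interpret A: iomn p 0 k by (rule iomn_I) simp
  have "Cst p 0 k (D p) = (\<Sum>j\<le>k. p k j * (if j = 0 then 0 else 1))"
    unfolding Cst_def
  proof (simp, intro sum.cong refl)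
    fix j assume j: "j \<in> {..k}"
    have "inside_out p 0 k 0 j = p k j" using A.col_sum[of j] j by simp
    then show "inside_out p 0 k 0 j * D p 0 j = p k j * (if j = 0 then 0 else 1)"
      by (cases j) auto
  qed
  also have "\<dots> = (\<Sum>j\<le>k. p k j) - p k 0"
    by (simp add: if_distrib sum_subtractf[symmetric] sum.delta cong: if_cong)
      (simp add: sum.remove[of "{..k}" 0] algebra_simps)
  finally show ?thesis using sum1 by simp
qed

lemma step_diag: assumes inv: "Inv N"  shows "\<forall>k\<le>Suc N. D p k k = 0"
  proof (intro allI impI)
    fix k assume "k \<le> Suc N"
    then show "D p k k = 0"
    proof (cases "k = Suc N")
      case True then show ?thesis using opt(1)[OF inv, of N] Cst_diag[OF inv] by simp
    next
      case False then show ?thesis using inv \<open>k \<le> Suc N\<close> unfolding Inv_def by auto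
    qed
  qed

lemma step_le1: assumes inv: "Inv N"  shows "\<forall>x y. x \<le> y \<longrightarrow> y \<le> Suc N \<longrightarrow> D p x y \<le> 1"
  proof (intro allI impI)
    fix x y assume xy: "x \<le> y" "y \<le> Suc N"
    show "D p x y \<le> 1"
    proof (cases "y = Suc N")
      case False then show ?thesis using inv xy unfolding Inv_def by auto
    next
      case True
      show ?thesis
      proof (cases x)
        case 0 then show ?thesis using True by simp
      next
        case (Suc m)
        then show ?thesis using True opt(1)[OF inv, of m] Cst_le1[OF inv, of m] xy by simp
      qed
    qed
  qed

lemma step_M: assumes inv: "Inv N" and le1: "\<forall>x y. x \<le> y \<longrightarrow> y \<le> Suc N \<longrightarrow> D p x y \<le> 1" shows "\<forall>x y. Suc x \<le> y \<longrightarrow> y \<le> Suc N \<longrightarrow> D p (Suc x) y \<le> D p x y"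
  proof (intro allI impI)
    fix x y assume xy: "Suc x \<le> y" "y \<le> Suc N"
    show "D p (Suc x) y \<le> D p x y"
    proof (cases "y = Suc N")
      case False then show ?thesis using inv xy unfolding Inv_def by auto
    next
      case True
      show ?thesis
      proof (cases x)
        case 0
        have a: "D p (Suc 0) (Suc N) \<le> 1" using le1[rule_format, of "Suc 0" "Suc N"] by linarith
        have b: "D p 0 (Suc N) = 1" by simp
        have "D p (Suc 0) (Suc N) \<le> D p 0 (Suc N)" using a b by linarith
        then show ?thesis using 0 True by blast
      next
        case (Suc m)
        then have mN: "Suc m \<le> N" using xy True by simp
        interpret A: iomn p m N by (rule iomn_I) (use mN in simp)
        obtain z where z: "z \<in> transport_plans p (Suc m) N"
          and zc: "(\<Sum>i\<le>Suc m. \<Sum>j\<le>N. z i j * D p i j) \<le> A.cost (D p) (inside_out p m N)"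
        proof -
          have cM: "D p (Suc m) j \<le> D p i j" if "i \<le> m" "m < j" "j \<le> N" for i j
            using Mfull[OF inv, of i "Suc m" j] that by simp
          show ?thesis using A.M_plan[where c="D p", OF mN cM] that by blast
        qed
        have "D p (Suc (Suc m)) (Suc N) \<le> (\<Sum>i\<le>Suc m. \<Sum>j\<le>N. z i j * D p i j)"
          unfolding D.simps
        proof (rule cInf_lower)
          show "(\<Sum>i\<le>Suc m. \<Sum>j\<le>N. z i j * D p i j) \<in> (\<lambda>z. \<Sum>i\<le>Suc m. \<Sum>j\<le>N. z i j * D p i j) ` transport_plans p (Suc m) N"
            using z by blast
          show "bdd_below ((\<lambda>z. \<Sum>i\<le>Suc m. \<Sum>j\<le>N. z i j * D p i j) ` transport_plans p (Suc m) N)"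
          proof (rule bdd_belowI)
            fix x assume "x \<in> (\<lambda>z. \<Sum>i\<le>Suc m. \<Sum>j\<le>N. z i j * D p i j) ` transport_plans p (Suc m) N"
            then obtain w where w: "w \<in> transport_plans p (Suc m) N" "x = (\<Sum>i\<le>Suc m. \<Sum>j\<le>N. w i j * D p i j)" by auto
            have "0 \<le> (\<Sum>i\<le>Suc m. \<Sum>j\<le>N. w i j * D p i j)"
              using w(1) D_nonneg unfolding transport_plans_def by (intro sum_nonneg mult_nonneg_nonneg) auto
            then show "0 \<le> x" using w by simp
          qed
        qed
        also have "\<dots> \<le> A.cost (D p) (inside_out p m N)" by (rule zc)
        also have "\<dots> = D p (Suc m) (Suc N)" using opt(1)[OF inv, of m] mN unfolding A.cost_def Cst_def by simp
        finally show ?thesis using Suc True by simp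
      qed
    qed
  qed

lemma step_Q: assumes inv: "Inv N"  shows "\<forall>x y. x < y \<longrightarrow> Suc y \<le> Suc N \<longrightarrow> Dl (D p) x y \<le> 0"
  proof (intro allI impI)
    fix x y assume xy: "x < y" "Suc y \<le> Suc N"
    show "Dl (D p) x y \<le> 0"
    proof (cases "y = N")
      case False then show ?thesis using inv xy unfolding Inv_def by auto
    next
      case True
      then obtain n where Nn: "N = Suc n" using xy by (cases N) auto
      show ?thesis
      proof (cases x)
        case 0
        have invn: "Inv n" using inv Nn unfolding Inv_def by auto
        have e1: "D p (Suc 0) (Suc N) = 1 - p (Suc n) 0" using opt(1)[OF inv, of 0] Cst_0[of N] Nn by simp
        have e2: "D p (Suc 0) N = 1 - p n 0" using opt(1)[OF invn, of 0] Cst_0[of n] Nn by simp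
        have d1: "D p 0 (Suc N) = 1" "D p 0 N = 1" using Nn by simp_all
        have "Dl (D p) x y = D p 0 (Suc N) - D p (Suc 0) (Suc N) - D p 0 N + D p (Suc 0) N"
          unfolding Dl_def using 0 True by simp
        also have "\<dots> = p (Suc n) 0 - p n 0" unfolding e1 e2 d1 by simp
        finally show ?thesis using Hstep[of 0 n] by simp
      next
        case (Suc m)
        then have mn1: "Suc m \<le> n" using xy True Nn by simp
        have invn: "Inv n" using inv Nn unfolding Inv_def by auto
        have "Dl (D p) x y = Cst p m (Suc n) (D p) - Cst p (Suc m) (Suc n) (D p) - Cst p m n (D p) + Cst p (Suc m) n (D p)"
          unfolding Dl_def using Suc True Nn opt(1)[OF inv, of m] opt(1)[OF inv, of "Suc m"]
            opt(1)[OF invn, of m] opt(1)[OF invn, of "Suc m"] mn1 by simp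
        also have "\<dots> \<le> 0"
        proof -
          have "Cst p m (Suc n) (D p) + Cst p (Suc m) n (D p) \<le> Cst p m n (D p) + Cst p (Suc m) (Suc n) (D p)"
          proof (rule main_ineq[OF mn1])
            show "D p k k = 0" if "k \<le> Suc n" for k using inv that Nn unfolding Inv_def by auto
            show "Dl (D p) a b \<le> 0" if "a < b" "b \<le> n" for a b using inv that Nn unfolding Inv_def by auto
          qed
          then show ?thesis by simp
        qed
        finally show ?thesis .
      qed
    qed
  qed

lemma Inv_step: assumes inv: "Inv N" shows "Inv (Suc N)"
  unfolding Inv_def using step_diag[OF inv] step_le1[OF inv] step_M[OF inv step_le1[OF inv]] step_Q[OF inv] by blast

lemma Inv_all: "Inv N"
proof (induction N)
  case 0 show ?case unfolding Inv_def Dl_def by auto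
next
  case (Suc N) then show ?case by (rule Inv_step)
qed

end

theorem theorem5:
  fixes p :: "nat \<Rightarrow> nat \<Rightarrow> real"
  assumes "is_distribution_seq p"
    and "condH p"
  shows "(\<forall>i j k l :: int. -1 \<le> i \<and> i \<le> j \<and> j \<le> k \<and> k \<le> l \<longrightarrow>
            d p i l + d p j k \<le> d p i k + d p j l)
       \<and> (\<forall>m n :: nat. m \<le> n \<longrightarrow>
            inside_out p m n \<in> transport_plans p m n
          \<and> (\<forall>z \<in> transport_plans p m n. plan_cost p m n (inside_out p m n) \<le> plan_cost p m n z))"
proof -
  interpret iosetup p using assms by unfold_locales
  have part1: "d p i l + d p j k \<le> d p i k + d p j l"
    if "-1 \<le> i" "i \<le> j" "j \<le> k" "k \<le> l" for i j k l :: int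
  proof -
    have "D p (nat (i+1)) (nat (l+1)) + D p (nat (j+1)) (nat (k+1)) \<le> D p (nat (i+1)) (nat (k+1)) + D p (nat (j+1)) (nat (l+1))"
      by (rule Qfull[OF Inv_all]) (use that in auto)
    then show ?thesis unfolding d_def .
  qed
  have pc: "plan_cost p m n z = (\<Sum>i\<le>m. \<Sum>j\<le>n. z i j * D p i j)" for m n z
    unfolding plan_cost_def d_def by simp
  have part2: "inside_out p m n \<in> transport_plans p m n
          \<and> (\<forall>z \<in> transport_plans p m n. plan_cost p m n (inside_out p m n) \<le> plan_cost p m n z)"
    if mn: "m \<le> n" for m n
  proof -
    interpret A: iomn p m n by (rule iomn_I) fact
    show ?thesis using A.io_plan opt(2)[OF Inv_all mn] unfolding pc Cst_def by blast
  qed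
  show ?thesis using part1 part2 by blast
qed

end
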